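(* Let $\Delta: M_n\to M_n$ be a weak-2-local derivation, let $p_1,\ldots,p_n$ be mutually orthogonal minimal projections in $M_n$, and for $i,j\in\{1,\ldots,n\}$ let $e_{ij}$ be the unique minimal partial isometry in $M_n$ with $e_{ij}^*e_{ij}=p_j$ and $e_{ij}e_{ij}^*=p_i$. Then there exists $w_0\in M_n$ such that $\Delta\left(\sum_{k=1}^n\lambda_kp_k\right)=\left[w_0,\sum_{k=1}^n\lambda_kp_k\right]$ for all $\lambda_1,\ldots,\lambda_n\in\mathbb{C}$, and $\Delta(e_{1j})=[w_0,e_{1j}]$ for all $2\le j\le n$.
   Context: $M_n=M_n(\mathbb{C})$ and $[x,y]=xy-yx$. A derivation on a C$^*$-algebra $A$ is a linear map $D:A\to A$ with $D(ab)=D(a)b+aD(b)$. A (not necessarily linear) map $\Delta:A\to A$ is a weak-2-local derivation if for every $a,b\in A$ and every $\phi\in A^*$ there exists a derivation $D_{a,b,\phi}:A\to A$ such that $\phi\Delta(a)=\phi D_{a,b,\phi}(a)$ and $\phi\Delta(b)=\phi D_{a,b,\phi}(b)$. *)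

theory Defs
  imports "HOL-Analysis.Analysis"
begin

text \<open>M_n(C) is rendered as the type complex^'n^'n for a finite index type 'n
  (n = CARD('n)). Matrix product is **, adjoint is the conjugate transpose.\<close>

type_synonym 'n cmat = "complex ^ 'n ^ 'n"

definition madj :: "'n::finite cmat \<Rightarrow> 'n cmat" where
  "madj A = (\<chi> i j. cnj (A $ j $ i))"

definition msc :: "complex \<Rightarrow> 'n::finite cmat \<Rightarrow> 'n cmat" where
  "msc c A = (\<chi> i j. c * A $ i $ j)"

definition commutator :: "'n::finite cmat \<Rightarrow> 'n cmat \<Rightarrow> 'n cmat" where
  "commutator x y = x ** y - y ** x"

text \<open>Complex-linear maps M_n -> M_n and complex-linear functionals on M_n
  (every linear functional on the finite-dimensional C*-algebra M_n is bounded,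
  so these are exactly the elements of the dual space).\<close>

definition clinear_map :: "('n::finite cmat \<Rightarrow> 'n cmat) \<Rightarrow> bool" where
  "clinear_map D \<longleftrightarrow> (\<forall>A B. D (A + B) = D A + D B) \<and> (\<forall>c A. D (msc c A) = msc c (D A))"

definition clinear_functional :: "('n::finite cmat \<Rightarrow> complex) \<Rightarrow> bool" where
  "clinear_functional \<phi> \<longleftrightarrow> (\<forall>A B. \<phi> (A + B) = \<phi> A + \<phi> B) \<and> (\<forall>c A. \<phi> (msc c A) = c * \<phi> A)"

definition is_derivation :: "('n::finite cmat \<Rightarrow> 'n cmat) \<Rightarrow> bool" where
  "is_derivation D \<longleftrightarrow> clinear_map D \<and> (\<forall>a b. D (a ** b) = D a ** b + a ** D b)"

definition weak_2_local_derivation :: "('n::finite cmat \<Rightarrow> 'n cmat) \<Rightarrow> bool" where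
  "weak_2_local_derivation \<Delta> \<longleftrightarrow>
     (\<forall>a b \<phi>. clinear_functional \<phi> \<longrightarrow>
        (\<exists>D. is_derivation D \<and> \<phi> (\<Delta> a) = \<phi> (D a) \<and> \<phi> (\<Delta> b) = \<phi> (D b)))"

definition is_projection :: "'n::finite cmat \<Rightarrow> bool" where
  "is_projection p \<longleftrightarrow> madj p = p \<and> p ** p = p"

definition minimal_projection :: "'n::finite cmat \<Rightarrow> bool" where
  "minimal_projection p \<longleftrightarrow> is_projection p \<and> p \<noteq> 0 \<and>
     (\<forall>q. is_projection q \<and> q ** p = q \<longrightarrow> q = 0 \<or> q = p)"

end

theory Submission
  imports Defs
begin


lemma sum_single: "finite S \<Longrightarrow> i \<in> S \<Longrightarrow> (\<And>k. k \<in> S \<Longrightarrow> k \<noteq> i \<Longrightarrow> f k = 0) \<Longrightarrow> sum f S = f i"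
  by (metis (mono_tags, lifting) sum.remove sum.neutral add.right_neutral DiffE insertCI)

lemma sum_two: "finite S \<Longrightarrow> i \<in> S \<Longrightarrow> j \<in> S \<Longrightarrow> i \<noteq> j \<Longrightarrow> (\<And>k. k \<in> S \<Longrightarrow> k \<noteq> i \<Longrightarrow> k \<noteq> j \<Longrightarrow> f k = 0) \<Longrightarrow> sum f S = f i + f j"
proof -
  assume a: "finite S" "i \<in> S" "j \<in> S" "i \<noteq> j" "\<And>k. k \<in> S \<Longrightarrow> k \<noteq> i \<Longrightarrow> k \<noteq> j \<Longrightarrow> f k = 0"
  have "sum f S = f i + sum f (S - {i})" using a by (simp add: sum.remove)
  also have "sum f (S - {i}) = f j" using a by (intro sum_single) auto
  finally show ?thesis .
qed

lemma mm_rdistrib: "((A::'a::semiring_1^'n^'m) + B) ** C = A ** C + B ** C"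
  by (simp add: matrix_matrix_mult_def vec_eq_iff distrib_right sum.distrib)
lemma mm_ldiff: "(A::'a::ring_1^'n^'m) ** (B - C) = A ** B - A ** C"
  by (simp add: matrix_matrix_mult_def vec_eq_iff right_diff_distrib sum_subtractf)
lemma mm_rdiff: "((A::'a::ring_1^'n^'m) - B) ** C = A ** C - B ** C"
  by (simp add: matrix_matrix_mult_def vec_eq_iff left_diff_distrib sum_subtractf)
lemma mm_lneg: "(A::'a::ring_1^'n^'m) ** (- B) = - (A ** B)"
  by (simp add: matrix_matrix_mult_def vec_eq_iff sum_negf)
lemma mm_rneg: "(- (A::'a::ring_1^'n^'m)) ** B = - (A ** B)"
  by (simp add: matrix_matrix_mult_def vec_eq_iff sum_negf)
lemma mm_lsum: "finite S \<Longrightarrow> (A::'a::semiring_1^'n^'m) ** sum f S = (\<Sum>x\<in>S. A ** f x)"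
  by (induction S rule: finite_induct) (auto simp: matrix_add_ldistrib)
lemma mm_rsum: "finite S \<Longrightarrow> sum f S ** (A::'a::semiring_1^'n^'m) = (\<Sum>x\<in>S. f x ** A)"
  by (induction S rule: finite_induct) (auto simp: mm_rdistrib)

lemma msc_add: "msc c (A + B) = msc c A + msc c B"
  by (simp add: msc_def vec_eq_iff distrib_left)
lemma msc_diff_scalar: "msc (c - d) A = msc c A - msc d A"
  by (simp add: msc_def vec_eq_iff left_diff_distrib)
lemma msc_0[simp]: "msc 0 A = 0" by (simp add: msc_def vec_eq_iff)
lemma msc_zero[simp]: "msc c 0 = 0" by (simp add: msc_def vec_eq_iff)
lemma msc_1[simp]: "msc 1 A = A" by (simp add: msc_def vec_eq_iff)
lemma msc_neg: "msc (- c) A = - msc c A" by (simp add: msc_def vec_eq_iff)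
lemma msc_uminus: "msc c (- A) = - msc c A" by (simp add: msc_def vec_eq_iff)
lemma msc_mml: "msc c A ** B = msc c (A ** B)"
  by (simp add: msc_def vec_eq_iff matrix_matrix_mult_def sum_distrib_left mult.assoc)
lemma msc_mmr: "A ** msc c B = msc c (A ** B)"
  by (simp add: msc_def vec_eq_iff matrix_matrix_mult_def sum_distrib_left mult.assoc mult.left_commute)
lemma msc_sum: "finite S \<Longrightarrow> msc c (sum f S) = (\<Sum>x\<in>S. msc c (f x))"
  by (induction S rule: finite_induct) (auto simp: msc_add)

lemma madj_mm: "madj (A ** B) = madj B ** madj (A::'n::finite cmat)"
  by (simp add: madj_def vec_eq_iff matrix_matrix_mult_def mult.commute)
lemma madj_madj[simp]: "madj (madj A) = A" by (simp add: madj_def vec_eq_iff)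
lemma madj_diff: "madj (A - B) = madj A - madj B" by (simp add: madj_def vec_eq_iff)

lemma madj_self_zero:
  fixes Y :: "'n::finite cmat"
  assumes "madj Y ** Y = 0" shows "Y = 0"
proof -
  have "\<And>i k. Y $ i $ k = 0"
  proof -
    fix i k
    have "(madj Y ** Y) $ k $ k = 0" using assms by simp
    hence "(\<Sum>i\<in>UNIV. cnj (Y $ i $ k) * Y $ i $ k) = 0"
      by (simp add: madj_def matrix_matrix_mult_def)
    hence "(\<Sum>i\<in>UNIV. complex_of_real ((cmod (Y $ i $ k))^2)) = 0"
      by (metis (no_types, lifting) complex_norm_square mult.commute sum.cong)
    hence "(\<Sum>i\<in>UNIV. (cmod (Y $ i $ k))^2) = 0"
      by (metis of_real_eq_0_iff of_real_sum)
    hence "\<forall>i\<in>UNIV. (cmod (Y $ i $ k))^2 = 0"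
      by (subst (asm) sum_nonneg_eq_0_iff) auto
    thus "Y $ i $ k = 0" by simp
  qed
  thus ?thesis by (simp add: vec_eq_iff)
qed


lemma deriv_add: "is_derivation D \<Longrightarrow> D (A + B) = D A + D B"
  by (simp add: is_derivation_def clinear_map_def)
lemma deriv_msc: "is_derivation D \<Longrightarrow> D (msc c A) = msc c (D A)"
  by (simp add: is_derivation_def clinear_map_def)
lemma deriv_mult: "is_derivation D \<Longrightarrow> D (A ** B) = D A ** B + A ** D B"
  by (simp add: is_derivation_def)
lemma deriv_0: "is_derivation D \<Longrightarrow> D 0 = 0"
  using deriv_add[of D 0 0] by simp
lemma deriv_sum: assumes "is_derivation D" "finite S" shows "D (sum f S) = (\<Sum>x\<in>S. D (f x))"
  using assms(2) by (induction S rule: finite_induct) (auto simp: deriv_0[OF assms(1)] deriv_add[OF assms(1)])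

lemma wprinc:
  fixes \<Delta> :: "'n::finite cmat \<Rightarrow> 'n cmat" and u v :: "'n cmat"
  assumes w: "weak_2_local_derivation \<Delta>"
    and h: "\<And>D. is_derivation D \<Longrightarrow> u ** D a ** v = msc c (u ** D b ** v)"
  shows "u ** \<Delta> a ** v = msc c (u ** \<Delta> b ** v)"
proof -
  have "\<And>r s. (u ** \<Delta> a ** v) $ r $ s = (msc c (u ** \<Delta> b ** v)) $ r $ s"
  proof -
    fix r s
    define \<phi> where "\<phi> X = (u ** X ** v) $ r $ s" for X
    have "clinear_functional \<phi>"
      unfolding clinear_functional_def \<phi>_def
      by (simp add: matrix_add_ldistrib mm_rdistrib msc_mml msc_mmr) (simp add: msc_def)
    then obtain D where D: "is_derivation D" "\<phi> (\<Delta> a) = \<phi> (D a)" "\<phi> (\<Delta> b) = \<phi> (D b)"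
      using w unfolding weak_2_local_derivation_def by blast
    have "\<phi> (\<Delta> a) = c * \<phi> (\<Delta> b)"
      using D h[OF D(1)] unfolding \<phi>_def by (simp add: msc_def)
    thus "(u ** \<Delta> a ** v) $ r $ s = (msc c (u ** \<Delta> b ** v)) $ r $ s"
      unfolding \<phi>_def by (simp add: msc_def)
  qed
  thus ?thesis by (simp add: vec_eq_iff)
qed

lemma wprinc0:
  fixes \<Delta> :: "'n::finite cmat \<Rightarrow> 'n cmat" and u v :: "'n cmat"
  assumes w: "weak_2_local_derivation \<Delta>"
    and h: "\<And>D. is_derivation D \<Longrightarrow> u ** D a ** v = 0"
  shows "u ** \<Delta> a ** v = 0"
  using wprinc[OF w, of u a v 0 a] h by simp

lemma wprinc1:
  fixes \<Delta> :: "'n::finite cmat \<Rightarrow> 'n cmat" and u v :: "'n cmat"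
  assumes w: "weak_2_local_derivation \<Delta>"
    and h: "\<And>D. is_derivation D \<Longrightarrow> u ** D a ** v = u ** D b ** v"
  shows "u ** \<Delta> a ** v = u ** \<Delta> b ** v"
  using wprinc[OF w, of u a v 1 b] h by simp




locale setup_ctx =
  fixes \<Delta> :: "'n::finite cmat \<Rightarrow> 'n cmat"
    and p :: "'n \<Rightarrow> 'n cmat"
    and e :: "'n \<Rightarrow> 'n \<Rightarrow> 'n cmat"
    and i1 :: 'n
  assumes w2: "weak_2_local_derivation \<Delta>"
    and minp: "\<And>i. minimal_projection (p i)"
    and orth: "\<And>i j. i \<noteq> j \<Longrightarrow> p i ** p j = 0"
    and adj1: "\<And>i j. madj (e i j) ** e i j = p j"
    and adj2: "\<And>i j. e i j ** madj (e i j) = p i"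
begin

lemma pp: "p k ** p k = p k" and padj: "madj (p k) = p k"
  using minp[of k] by (auto simp: minimal_projection_def is_projection_def)

definition P :: "'n option \<Rightarrow> 'n cmat" where
  "P r = (case r of None \<Rightarrow> mat 1 - (\<Sum>k\<in>UNIV. p k) | Some k \<Rightarrow> p k)"

lemma P_Some[simp]: "P (Some k) = p k" by (simp add: P_def)

lemma pk_sum: "p k ** (\<Sum>i\<in>UNIV. p i) = p k" "(\<Sum>i\<in>UNIV. p i) ** p k = p k"
proof -
  show "p k ** (\<Sum>i\<in>UNIV. p i) = p k"
    by (simp add: mm_lsum, subst sum_single[where i=k]) (auto simp: orth pp)
  show "(\<Sum>i\<in>UNIV. p i) ** p k = p k"
    by (simp add: mm_rsum, subst sum_single[where i=k]) (auto simp: orth pp)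
qed

lemma PP: "P r ** P s = (if r = s then P r else 0)"
proof (cases r; cases s)
  show "r = None \<Longrightarrow> s = None \<Longrightarrow> ?thesis"
    by (simp add: P_def mm_ldiff mm_rdiff pk_sum mm_lsum)
next
  fix b assume "r = None" "s = Some b" thus ?thesis
    by (simp add: P_def mm_rdiff pk_sum)
next
  fix a assume "r = Some a" "s = None" thus ?thesis
    by (simp add: P_def mm_ldiff pk_sum)
next
  fix a b assume "r = Some a" "s = Some b" thus ?thesis
    by (auto simp: orth pp)
qed

lemma PP': "X ** P r ** P s = (if r = s then X ** P r else 0)"
  by (simp add: matrix_mul_assoc[symmetric] PP)

lemma sumP: "(\<Sum>r\<in>UNIV. P r) = mat 1"
proof -
  have "(\<Sum>r\<in>UNIV. P r) = P None + (\<Sum>r\<in>range Some. P r)"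
    by (simp add: UNIV_option_conv)
  also have "(\<Sum>r\<in>range Some. P r) = (\<Sum>k\<in>UNIV. p k)"
    by (simp add: sum.reindex)
  finally show ?thesis by (simp add: P_def)
qed

lemma decomp: "X = (\<Sum>r\<in>UNIV. \<Sum>s\<in>UNIV. P r ** X ** P s)"
proof -
  have "X = (\<Sum>r\<in>UNIV. P r) ** X ** (\<Sum>s\<in>UNIV. P s)" by (simp add: sumP)
  also have "\<dots> = (\<Sum>r\<in>UNIV. P r ** X ** (\<Sum>s\<in>UNIV. P s))"
    by (simp add: mm_rsum)
  also have "\<dots> = (\<Sum>r\<in>UNIV. \<Sum>s\<in>UNIV. P r ** X ** P s)"
    by (simp add: mm_lsum)
  finally show ?thesis .
qed

lemma block_eq: "(\<And>r s. P r ** X ** P s = P r ** Y ** P s) \<Longrightarrow> X = Y"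
proof -
  assume h: "\<And>r s. P r ** X ** P s = P r ** Y ** P s"
  have "X = (\<Sum>r\<in>UNIV. \<Sum>s\<in>UNIV. P r ** X ** P s)" by (rule decomp)
  also have "\<dots> = (\<Sum>r\<in>UNIV. \<Sum>s\<in>UNIV. P r ** Y ** P s)" using h by simp
  also have "\<dots> = Y" by (rule decomp[symmetric])
  finally show ?thesis .
qed

lemma block_of: "P a ** (\<Sum>r\<in>UNIV. \<Sum>s\<in>UNIV. P r ** W r s ** P s) ** P b = P a ** W a b ** P b"
proof -
  have "P a ** (\<Sum>r\<in>UNIV. \<Sum>s\<in>UNIV. P r ** W r s ** P s) ** P b
      = (\<Sum>r\<in>UNIV. \<Sum>s\<in>UNIV. P a ** (P r ** W r s ** P s) ** P b)"
    by (simp add: mm_rsum mm_lsum)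
  also have "\<dots> = (\<Sum>s\<in>UNIV. P a ** (P a ** W a s ** P s) ** P b)"
    by (rule sum_single) (auto simp: matrix_mul_assoc PP)
  also have "\<dots> = P a ** (P a ** W a b ** P b) ** P b"
    by (rule sum_single) (auto simp: matrix_mul_assoc[symmetric] PP)
  also have "\<dots> = P a ** W a b ** P b"
    by (simp add: matrix_mul_assoc PP) (simp add: matrix_mul_assoc[symmetric] PP)
  finally show ?thesis .
qed

end



context setup_ctx begin

lemma pP: "p k ** P s = (if s = Some k then p k else 0)" "P s ** p k = (if s = Some k then p k else 0)"
  using PP[of "Some k" s] PP[of s "Some k"] by auto
lemma pP': "X ** p k ** P s = (if s = Some k then X ** p k else 0)" "X ** P s ** p k = (if s = Some k then X ** P s else 0)"
  by (auto simp: matrix_mul_assoc[symmetric] pP)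
lemma pp2: "p k ** p j = (if k = j then p k else 0)" "X ** p k ** p j = (if k = j then X ** p k else 0)"
  by (auto simp: matrix_mul_assoc[symmetric] pp orth)

lemmas alg = matrix_add_ldistrib mm_rdistrib mm_ldiff mm_rdiff mm_lneg mm_rneg matrix_mul_assoc
  pP pP' pp2 PP PP' msc_mml msc_mmr

lemma Dp: "is_derivation D \<Longrightarrow> D (p k) = D (p k) ** p k + p k ** D (p k)"
  using deriv_mult[of D "p k" "p k"] pp by simp

lemma DZ: assumes "is_derivation D" "Some k \<noteq> r" "Some k \<noteq> s"
  shows "P r ** D (p k) ** P s = 0"
proof -
  have "P r ** D (p k) ** P s = P r ** (D (p k) ** p k + p k ** D (p k)) ** P s"
    using Dp[OF assms(1), of k] by metis
  also have "\<dots> = 0" using assms(2,3) by (simp add: alg)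
  finally show ?thesis .
qed

lemma Ddiag: assumes "is_derivation D" shows "p k ** D (p k) ** p k = 0"
proof -
  have "p k ** D (p k) ** p k = p k ** (D (p k) ** p k + p k ** D (p k)) ** p k"
    using Dp[OF assms(1), of k] by metis
  also have "\<dots> = p k ** D (p k) ** p k + p k ** D (p k) ** p k" by (simp add: alg pp)
  finally show ?thesis by simp
qed

lemma DY: assumes "is_derivation D" "i \<noteq> j"
  shows "p i ** D (p i) ** p j = - (p i ** D (p j) ** p j)"
proof -
  have "0 = D (p i ** p j)" using assms by (simp add: orth deriv_0)
  also have "\<dots> = D (p i) ** p j + p i ** D (p j)" by (rule deriv_mult[OF assms(1)])
  finally have "p i ** (D (p i) ** p j + p i ** D (p j)) ** p j = 0" by (metis times0_left times0_right)
  hence "p i ** D (p i) ** p j + p i ** D (p j) ** p j = 0" by (simp add: alg pp)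
  thus ?thesis by (simp add: eq_neg_iff_add_eq_0)
qed

definition mu :: "('n \<Rightarrow> complex) \<Rightarrow> 'n option \<Rightarrow> complex" where
  "mu lam r = (case r of None \<Rightarrow> 0 | Some k \<Rightarrow> lam k)"

lemma aP: "(\<Sum>k\<in>UNIV. msc (lam k) (p k)) ** P s = msc (mu lam s) (P s)"
   "P s ** (\<Sum>k\<in>UNIV. msc (lam k) (p k)) = msc (mu lam s) (P s)"
proof -
  show "(\<Sum>k\<in>UNIV. msc (lam k) (p k)) ** P s = msc (mu lam s) (P s)"
  proof (cases s)
    case None thus ?thesis by (simp add: mm_rsum msc_mml pP mu_def)
  next
    case (Some j) thus ?thesis
      by (simp add: mm_rsum msc_mml pP mu_def, subst sum_single[where i=j]) (auto simp: pp2)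
  qed
  show "P s ** (\<Sum>k\<in>UNIV. msc (lam k) (p k)) = msc (mu lam s) (P s)"
  proof (cases s)
    case None thus ?thesis by (simp add: mm_lsum msc_mmr pP mu_def)
  next
    case (Some j) thus ?thesis
      by (simp add: mm_lsum msc_mmr pP mu_def, subst sum_single[where i=j]) (auto simp: pp2)
  qed
qed

lemma DA: assumes "is_derivation D"
  shows "P r ** D (\<Sum>k\<in>UNIV. msc (lam k) (p k)) ** P s = (\<Sum>k\<in>UNIV. msc (lam k) (P r ** D (p k) ** P s))"
  by (simp add: deriv_sum[OF assms] deriv_msc[OF assms] mm_lsum mm_rsum msc_mml msc_mmr)

end



context setup_ctx begin

lemma e_right: "e i j ** p j = e i j"
proof -
  let ?E = "e i j"
  define Y where "Y = ?E - ?E ** p j"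
  have "madj Y ** Y = (madj ?E - p j ** madj ?E) ** (?E - ?E ** p j)"
    by (simp add: Y_def madj_diff madj_mm padj)
  also have "\<dots> = 0"
    by (simp add: mm_ldiff mm_rdiff matrix_mul_assoc adj1)
       (simp add: matrix_mul_assoc[symmetric] adj1 pp)
  finally have "Y = 0" using madj_self_zero by auto
  thus ?thesis by (simp add: Y_def)
qed

lemma e_left: "p i ** e i j = e i j"
proof -
  let ?E = "e i j"
  define Y where "Y = madj ?E - madj ?E ** p i"
  have "madj Y ** Y = (?E - p i ** ?E) ** (madj ?E - madj ?E ** p i)"
    by (simp add: Y_def madj_diff madj_mm padj)
  also have "\<dots> = 0"
    by (simp add: mm_ldiff mm_rdiff matrix_mul_assoc adj2)
       (simp add: matrix_mul_assoc[symmetric] adj2 pp)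
  finally have "Y = 0" using madj_self_zero by auto
  hence "madj (madj ?E) = madj (madj ?E ** p i)" by (simp add: Y_def)
  thus ?thesis by (simp add: madj_mm padj)
qed

lemma padj_e: "p j ** madj (e i j) = madj (e i j)"
  by (metis e_right madj_mm padj)

lemma eP: "e i j ** P s = (if s = Some j then e i j else 0)"
  "X ** e i j ** P s = (if s = Some j then X ** e i j else 0)"
  "P r ** e i j = (if r = Some i then e i j else 0)"
  "X ** P r ** e i j = (if r = Some i then X ** e i j else 0)"
proof -
  show 1: "e i j ** P s = (if s = Some j then e i j else 0)"
    by (metis e_right matrix_mul_assoc pP(1) times0_right)
  show "X ** e i j ** P s = (if s = Some j then X ** e i j else 0)"
    by (simp add: matrix_mul_assoc[symmetric] 1)
  show 2: "P r ** e i j = (if r = Some i then e i j else 0)"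
    by (metis e_left matrix_mul_assoc pP(2) times0_left)
  show "X ** P r ** e i j = (if r = Some i then X ** e i j else 0)"
    by (simp add: matrix_mul_assoc[symmetric] 2)
qed

lemma ep: "e i j ** p k = (if k = j then e i j else 0)"
  "X ** e i j ** p k = (if k = j then X ** e i j else 0)"
  "p k ** e i j = (if k = i then e i j else 0)"
  "X ** p k ** e i j = (if k = i then X ** e i j else 0)"
proof -
  show 1: "e i j ** p k = (if k = j then e i j else 0)"
    by (metis e_right matrix_mul_assoc pp2(1) times0_right)
  show "X ** e i j ** p k = (if k = j then X ** e i j else 0)"
    by (simp add: matrix_mul_assoc[symmetric] 1)
  show 2: "p k ** e i j = (if k = i then e i j else 0)"
    by (metis e_left matrix_mul_assoc pp2(1) times0_left)
  show "X ** p k ** e i j = (if k = i then X ** e i j else 0)"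
    by (simp add: matrix_mul_assoc[symmetric] 2)
qed

lemma DE_a: assumes D: "is_derivation D" and r: "r \<noteq> Some i" and s: "s \<noteq> Some j"
  shows "P r ** D (e i j) ** P s = 0"
proof -
  have "D (e i j) = D (p i) ** e i j + p i ** D (e i j)"
    using deriv_mult[OF D, of "p i" "e i j"] by (simp add: e_left)
  hence "P r ** D (e i j) ** P s = P r ** (D (p i) ** e i j + p i ** D (e i j)) ** P s" by simp
  also have "\<dots> = 0" using r s by (simp add: alg eP ep)
  finally show ?thesis .
qed

lemma De_l: "is_derivation D \<Longrightarrow> D (e i j) = D (p i) ** e i j + p i ** D (e i j)"
  using deriv_mult[of D "p i" "e i j"] by (simp add: e_left)
lemma De_r: "is_derivation D \<Longrightarrow> D (e i j) = D (e i j) ** p j + e i j ** D (p j)"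
  using deriv_mult[of D "e i j" "p j"] by (simp add: e_right)

lemma caseb: assumes r: "r \<noteq> Some i" and ij: "i \<noteq> j"
  shows "P r ** \<Delta> (e i j) ** p j = P r ** \<Delta> (p i) ** e i j"
proof -
  let ?v = "p j + e i j"
  have h: "P r ** D (e i j) ** ?v = P r ** D (p i) ** ?v" if D: "is_derivation D" for D
  proof -
    have 1: "P r ** D (e i j) ** p i = 0" using DE_a[OF D r, where s="Some i"] ij by simp
    have 2: "P r ** D (p i) ** p j = 0" using DZ[OF D, of i r "Some j"] r ij by simp
    have "P r ** D (e i j) ** ?v = P r ** D (e i j) ** p j + P r ** D (e i j) ** p i ** e i j"
      by (simp add: matrix_add_ldistrib matrix_mul_assoc[symmetric] e_left)
    also have "\<dots> = P r ** D (e i j) ** p j" using 1 by simp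
    also have "\<dots> = P r ** (D (p i) ** e i j + p i ** D (e i j)) ** p j"
      using De_l[OF D, of i j] by metis
    also have "\<dots> = P r ** D (p i) ** e i j" using r by (simp add: alg eP ep)
    finally show ?thesis using 2 by (simp add: matrix_add_ldistrib)
  qed
  have H: "P r ** \<Delta> (e i j) ** ?v = P r ** \<Delta> (p i) ** ?v" by (rule wprinc1[OF w2 h])
  have 1: "P r ** \<Delta> (e i j) ** p i = 0"
    by (rule wprinc0[OF w2]) (use DE_a[where r=r and s="Some i" and i=i and j=j] r ij in auto)
  have 2: "P r ** \<Delta> (p i) ** p j = 0"
    by (rule wprinc0[OF w2]) (use DZ[where k=i and r=r and s="Some j"] r ij in auto)
  have "P r ** \<Delta> (e i j) ** ?v = P r ** \<Delta> (e i j) ** p j + P r ** \<Delta> (e i j) ** p i ** e i j"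
    by (simp add: matrix_add_ldistrib matrix_mul_assoc[symmetric] e_left)
  also have "\<dots> = P r ** \<Delta> (e i j) ** p j" using 1 by simp
  finally show ?thesis using H 2 by (simp add: matrix_add_ldistrib)
qed

lemma casec: assumes s: "s \<noteq> Some j" and ij: "i \<noteq> j"
  shows "p i ** \<Delta> (e i j) ** P s = e i j ** \<Delta> (p j) ** P s"
proof -
  let ?u = "p i + e i j"
  have h: "?u ** D (e i j) ** P s = ?u ** D (p j) ** P s" if D: "is_derivation D" for D
  proof -
    have 1: "p j ** D (e i j) ** P s = 0" using DE_a[OF D, where r="Some j" and i=i and s=s and j=j] ij s by simp
    have 2: "p i ** D (p j) ** P s = 0" using DZ[OF D, of j "Some i" s] s ij by simp
    have "?u ** D (e i j) ** P s = p i ** D (e i j) ** P s + e i j ** (p j ** D (e i j) ** P s)"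
      by (simp add: mm_rdistrib matrix_mul_assoc e_right)
    also have "\<dots> = p i ** D (e i j) ** P s" using 1 by simp
    also have "\<dots> = p i ** (D (e i j) ** p j + e i j ** D (p j)) ** P s"
      using De_r[OF D, of i j] by metis
    also have "\<dots> = e i j ** D (p j) ** P s" using s by (simp add: alg eP ep)
    finally show ?thesis using 2 by (simp add: mm_rdistrib)
  qed
  have H: "?u ** \<Delta> (e i j) ** P s = ?u ** \<Delta> (p j) ** P s" by (rule wprinc1[OF w2 h])
  have 1: "p j ** \<Delta> (e i j) ** P s = 0"
    by (rule wprinc0[OF w2]) (use DE_a[where r="Some j" and i=i and s=s and j=j] s ij in auto)
  have 2: "p i ** \<Delta> (p j) ** P s = 0"
    by (rule wprinc0[OF w2]) (use DZ[where k=j and r="Some i" and s=s] s ij in auto)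
  have "?u ** \<Delta> (e i j) ** P s = p i ** \<Delta> (e i j) ** P s + e i j ** (p j ** \<Delta> (e i j) ** P s)"
    by (simp add: mm_rdistrib matrix_mul_assoc e_right)
  also have "\<dots> = p i ** \<Delta> (e i j) ** P s" using 1 by simp
  finally show ?thesis using H 2 by (simp add: mm_rdistrib)
qed

lemma DeltaY: "i \<noteq> j \<Longrightarrow> p i ** \<Delta> (p i) ** p j = - (p i ** \<Delta> (p j) ** p j)"
  using wprinc[OF w2, of "p i" "p i" "p j" "-1" "p j"] DY by (simp add: msc_neg)

end



context setup_ctx begin

lemma DZp: "is_derivation D \<Longrightarrow> Some k \<noteq> r \<Longrightarrow> k \<noteq> j \<Longrightarrow> P r ** D (p k) ** p j = 0"
  using DZ[where D=D and k=k and r=r and s="Some j"] by simp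
lemma DZp2: "is_derivation D \<Longrightarrow> k \<noteq> i \<Longrightarrow> Some k \<noteq> s \<Longrightarrow> p i ** D (p k) ** P s = 0"
  using DZ[where D=D and k=k and r="Some i" and s=s] by simp
lemma DZp3: "is_derivation D \<Longrightarrow> k \<noteq> i \<Longrightarrow> k \<noteq> j \<Longrightarrow> p i ** D (p k) ** p j = 0"
  using DZ[where D=D and k=k and r="Some i" and s="Some j"] by simp

definition dd :: "'n \<Rightarrow> 'n cmat" where
  "dd k = (if k = i1 then 0 else - (madj (e i1 k) ** \<Delta> (e i1 k)))"

definition W :: "'n option \<Rightarrow> 'n option \<Rightarrow> 'n cmat" where
  "W r s = (case s of None \<Rightarrow> (case r of None \<Rightarrow> 0 | Some i \<Rightarrow> - \<Delta> (p i))
                    | Some j \<Rightarrow> (if r = Some j then dd j else \<Delta> (p j)))"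

definition w0 :: "'n cmat" where
  "w0 = (\<Sum>r\<in>UNIV. \<Sum>s\<in>UNIV. P r ** W r s ** P s)"

lemma w0_block: "P r ** w0 ** P s = P r ** W r s ** P s"
  unfolding w0_def by (rule block_of)

lemma w0_block': "X ** P r ** w0 ** P s = X ** P r ** W r s ** P s"
  by (metis matrix_mul_assoc w0_block)

lemma a_rhs: "P r ** commutator w0 (\<Sum>k\<in>UNIV. msc (lam k) (p k)) ** P s
   = msc (mu lam s - mu lam r) (P r ** W r s ** P s)"
proof -
  let ?a = "\<Sum>k\<in>UNIV. msc (lam k) (p k)"
  have "P r ** commutator w0 ?a ** P s = P r ** w0 ** (?a ** P s) - (P r ** ?a) ** w0 ** P s"
    by (simp add: commutator_def mm_ldiff mm_rdiff matrix_mul_assoc)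
  also have "\<dots> = msc (mu lam s) (P r ** w0 ** P s) - msc (mu lam r) (P r ** w0 ** P s)"
    by (simp only: aP msc_mml msc_mmr)
  finally show ?thesis by (simp add: msc_diff_scalar w0_block)
qed

lemma a_block: "P r ** \<Delta> (\<Sum>k\<in>UNIV. msc (lam k) (p k)) ** P s
   = P r ** commutator w0 (\<Sum>k\<in>UNIV. msc (lam k) (p k)) ** P s"
proof -
  let ?a = "\<Sum>k\<in>UNIV. msc (lam k) (p k)"
  show ?thesis
  proof (cases "r = s")
    case True
    have "P r ** \<Delta> ?a ** P r = 0"
    proof (rule wprinc0[OF w2])
      fix D :: "'n cmat \<Rightarrow> 'n cmat" assume D: "is_derivation D"
      have "\<And>k. P r ** D (p k) ** P r = 0"
        by (metis DZ[OF D] Ddiag[OF D] P_Some)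
      thus "P r ** D ?a ** P r = 0" by (simp add: DA[OF D])
    qed
    thus ?thesis using True by (simp add: a_rhs)
  next
    case rs: False
    show ?thesis
    proof (cases s)
      case (Some j)
      have "P r ** \<Delta> ?a ** p j = msc (lam j - mu lam r) (P r ** \<Delta> (p j) ** p j)"
      proof (rule wprinc[OF w2])
        fix D :: "'n cmat \<Rightarrow> 'n cmat" assume D: "is_derivation D"
        show "P r ** D ?a ** p j = msc (lam j - mu lam r) (P r ** D (p j) ** p j)"
        proof (cases r)
          case None
          have "P r ** D ?a ** p j = (\<Sum>k\<in>UNIV. msc (lam k) (P r ** D (p k) ** P (Some j)))"
            using DA[OF D, where r=r and s="Some j" and lam=lam] by simp
          also have "\<dots> = msc (lam j) (P r ** D (p j) ** P (Some j))"
            by (rule sum_single) (auto simp: DZ[OF D] DZp[OF D] DZp2[OF D] DZp3[OF D] None)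
          finally show ?thesis by (simp add: None mu_def)
        next
          case (Some i)
          have ij: "i \<noteq> j" using rs Some \<open>s = Some j\<close> by auto
          have "P r ** D ?a ** p j = (\<Sum>k\<in>UNIV. msc (lam k) (P r ** D (p k) ** P (Some j)))"
            using DA[OF D, where r=r and s="Some j" and lam=lam] by simp
          also have "\<dots> = msc (lam i) (P r ** D (p i) ** P (Some j)) + msc (lam j) (P r ** D (p j) ** P (Some j))"
            by (rule sum_two) (use ij in \<open>auto simp: DZ[OF D] DZp[OF D] DZp2[OF D] DZp3[OF D] Some\<close>)
          also have "\<dots> = msc (lam j - lam i) (p i ** D (p j) ** p j)"
            using DY[OF D ij] by (simp add: Some msc_uminus msc_diff_scalar)
          finally show ?thesis by (simp add: Some mu_def)
        qed
      qed
      moreover have "W r s = \<Delta> (p j)" using rs Some by (simp add: W_def)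
      ultimately show ?thesis using Some a_rhs[where r=r and s="Some j" and lam=lam] by (simp add: mu_def)
    next
      case None
      then obtain i where r: "r = Some i" using rs by (cases r) auto
      have "p i ** \<Delta> ?a ** P None = msc (lam i) (p i ** \<Delta> (p i) ** P None)"
      proof (rule wprinc[OF w2])
        fix D :: "'n cmat \<Rightarrow> 'n cmat" assume D: "is_derivation D"
        have "p i ** D ?a ** P None = (\<Sum>k\<in>UNIV. msc (lam k) (P (Some i) ** D (p k) ** P None))"
          using DA[OF D, where r="Some i" and s="None" and lam=lam] by simp
        also have "\<dots> = msc (lam i) (P (Some i) ** D (p i) ** P None)"
          by (rule sum_single) (auto simp: DZ[OF D] DZp[OF D] DZp2[OF D] DZp3[OF D])
        finally show "p i ** D ?a ** P None = msc (lam i) (p i ** D (p i) ** P None)" by simp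
      qed
      thus ?thesis using None r a_rhs[where r="Some i" and s=None and lam=lam]
        by (simp add: mu_def W_def mm_lneg mm_rneg msc_uminus msc_neg)
    qed
  qed
qed

end



context setup_ctx begin

lemma e_block: assumes j: "j \<noteq> i1"
  shows "P r ** \<Delta> (e i1 j) ** P s = P r ** commutator w0 (e i1 j) ** P s"
proof -
  let ?E = "e i1 j"
  have rhs: "P r ** commutator w0 ?E ** P s = P r ** w0 ** ?E ** P s - P r ** ?E ** w0 ** P s"
    by (simp add: commutator_def mm_ldiff mm_rdiff matrix_mul_assoc)
  show ?thesis
  proof (cases "r = Some i1")
    case False note r = this
    show ?thesis
    proof (cases "s = Some j")
      case False
      have "P r ** \<Delta> ?E ** P s = 0"
        by (rule wprinc0[OF w2]) (use DE_a[where r=r and s=s and i=i1 and j=j] r False in auto)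
      thus ?thesis using r False rhs by (simp add: eP ep)
    next
      case True
      have W: "W r (Some i1) = \<Delta> (p i1)" using r by (simp add: W_def)
      have "P r ** w0 ** ?E = P r ** w0 ** P (Some i1) ** ?E"
        by (simp only: P_Some matrix_mul_assoc[symmetric] e_left)
      also have "\<dots> = P r ** W r (Some i1) ** P (Some i1) ** ?E"
        by (simp only: w0_block)
      also have "\<dots> = P r ** \<Delta> (p i1) ** ?E"
        by (simp only: W P_Some matrix_mul_assoc[symmetric] e_left)
      finally have 1: "P r ** w0 ** ?E = P r ** \<Delta> (p i1) ** ?E" .
      show ?thesis using r True caseb[OF r j[symmetric]] 1 rhs by (simp add: eP ep)
    qed
  next
    case True note r = this
    show ?thesis
    proof (cases "s = Some j")
      case False
      have c: "p i1 ** \<Delta> ?E ** P s = ?E ** \<Delta> (p j) ** P s"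
        by (rule casec[OF False j[symmetric]])
      have "?E ** w0 ** P s = ?E ** P (Some j) ** w0 ** P s"
        by (simp add: e_right)
      also have "\<dots> = ?E ** p j ** W (Some j) s ** P s"
        using w0_block'[where X="?E" and r="Some j" and s=s] by simp
      finally have 2: "?E ** w0 ** P s = ?E ** p j ** W (Some j) s ** P s" .
      show ?thesis
      proof (cases s)
        case None
        have "W (Some j) s = - \<Delta> (p j)" using None by (simp add: W_def)
        thus ?thesis using r False c 2 None rhs
          by (simp add: eP ep mm_lneg mm_rneg e_right)
      next
        case (Some k)
        have kj: "j \<noteq> k" using False Some by auto
        have "W (Some j) s = \<Delta> (p k)" using Some kj by (simp add: W_def)
        hence 3: "?E ** w0 ** P s = ?E ** (p j ** \<Delta> (p k) ** p k)" using 2 Some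
          by (simp add: matrix_mul_assoc)
        have "?E ** \<Delta> (p j) ** p k = ?E ** (p j ** \<Delta> (p j) ** p k)"
          by (simp add: matrix_mul_assoc e_right)
        also have "\<dots> = - (?E ** (p j ** \<Delta> (p k) ** p k))"
          by (simp add: DeltaY[OF kj] mm_lneg)
        finally show ?thesis using r False c 3 Some rhs
          by (simp add: eP ep)
      qed
    next
      case True note s = this
      have 1: "P r ** w0 ** ?E = 0"
      proof -
        have "P r ** w0 ** ?E = P r ** w0 ** P (Some i1) ** ?E"
          by (simp only: P_Some matrix_mul_assoc[symmetric] e_left)
        also have "\<dots> = P r ** W r (Some i1) ** P (Some i1) ** ?E"
          by (simp only: w0_block)
        also have "\<dots> = 0" using r by (simp add: W_def dd_def)
        finally show ?thesis .
      qed
      have 2: "?E ** w0 ** P s = - (p i1 ** \<Delta> ?E ** p j)"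
      proof -
        have "?E ** w0 ** P s = ?E ** P (Some j) ** w0 ** P (Some j)"
          by (simp add: e_right s)
        also have "\<dots> = ?E ** P (Some j) ** W (Some j) (Some j) ** P (Some j)"
          by (rule w0_block')
        also have "\<dots> = - (?E ** (p j ** madj ?E) ** \<Delta> ?E ** p j)"
          using j by (simp add: W_def dd_def mm_lneg mm_rneg matrix_mul_assoc)
        also have "\<dots> = - (p i1 ** \<Delta> ?E ** p j)"
          by (simp add: padj_e adj2)
        finally show ?thesis .
      qed
      have 3: "P r ** ?E ** w0 ** P s = ?E ** w0 ** P s"
        using r by (simp add: e_left)
      have "P r ** commutator w0 ?E ** P s = P r ** w0 ** ?E - (- (p i1 ** \<Delta> ?E ** p j))"
        using rhs 1 2 3 s by (simp add: eP)
      thus ?thesis using r s 1 by simp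
    qed
  qed
qed

end

theorem proposition2p10:
  fixes \<Delta> :: "'n::finite cmat \<Rightarrow> 'n cmat"
    and p :: "'n \<Rightarrow> 'n cmat"
    and e :: "'n \<Rightarrow> 'n \<Rightarrow> 'n cmat"
    and i1 :: 'n
  assumes "weak_2_local_derivation \<Delta>"
    and "\<And>i. minimal_projection (p i)"
    and "\<And>i j. i \<noteq> j \<Longrightarrow> p i ** p j = 0"
    and "\<And>i j. madj (e i j) ** e i j = p j"
    and "\<And>i j. e i j ** madj (e i j) = p i"
  shows "\<exists>w0. (\<forall>lam :: 'n \<Rightarrow> complex.
                 \<Delta> (\<Sum>k\<in>UNIV. msc (lam k) (p k)) = commutator w0 (\<Sum>k\<in>UNIV. msc (lam k) (p k)))
             \<and> (\<forall>j. j \<noteq> i1 \<longrightarrow> \<Delta> (e i1 j) = commutator w0 (e i1 j))"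
proof -
  interpret S: setup_ctx \<Delta> p e i1 by (rule setup_ctx.intro) (fact assms)+
  show ?thesis
  proof (rule exI[where x=S.w0], intro conjI allI impI)
    fix lam :: "'n \<Rightarrow> complex"
    show "\<Delta> (\<Sum>k\<in>UNIV. msc (lam k) (p k)) = commutator S.w0 (\<Sum>k\<in>UNIV. msc (lam k) (p k))"
      by (rule S.block_eq) (rule S.a_block)
  next
    fix j assume "j \<noteq> i1"
    then show "\<Delta> (e i1 j) = commutator S.w0 (e i1 j)"
      by (rule S.block_eq[OF S.e_block])
  qed
qed

end
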